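(* Let $M\subset AG_k(n)$ be the set of fibers of a skew fibration of $\mathbb R^n$ by oriented affine $k$-planes. Then $M$ is topologically closed in $AG_k(n)$. Moreover, if $(u_n,v_n)\in M$ is a sequence with no accumulation point in $M$, then $|v_n|\to\infty$.
   Context: $AG_k(n)$ is the manifold of oriented affine $k$-planes in $\mathbb R^n$; a plane is written as $(u,v)$ where $u$ is the parallel oriented linear $k$-plane and $v\in u^\perp$ is the point of the plane nearest to the origin. A fibration of $\mathbb R^n$ by oriented affine $k$-planes is a family of pairwise disjoint oriented affine $k$-planes covering $\mathbb R^n$ such that the map sending a point to its fiber is continuous; it is skew if no two distinct fibers contain parallel lines. *)

theory Defs
  imports "HOL-Analysis.Analysis"
begin

text \<open>An oriented linear k-plane in R^n is represented by its Pluecker vector: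
  for an orthonormal k-frame F (rows F$i), the function sending an index map
  sigma : 'k => 'n to the k x k minor det (F$i$(sigma j)).  This is the standard
  (injective, topological) Pluecker embedding of the oriented Grassmannian.\<close>

definition orthonormal_frame :: "real^'n^'k \<Rightarrow> bool" where
  "orthonormal_frame F \<longleftrightarrow> (\<forall>i j. F$i \<bullet> F$j = (if i = j then 1 else 0))"

definition pluecker :: "real^'n^'k \<Rightarrow> (('k \<Rightarrow> 'n) \<Rightarrow> real)" where
  "pluecker F = (\<lambda>\<sigma>. det ((\<chi> i j. F$i$(\<sigma> j)) :: real^'k^'k))"

type_synonym ('n, 'k) agplane = "(('k \<Rightarrow> 'n) \<Rightarrow> real) \<times> (real^'n)"

definition AG :: "('n::finite, 'k::finite) agplane set" where
  "AG = {(pluecker F, v) | F v. orthonormal_frame F \<and> (\<forall>i. F$i \<bullet> v = 0)}"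

definition lin_part :: "('n::finite, 'k::finite) agplane \<Rightarrow> (real^'n) set" where
  "lin_part a = {d. \<exists>F::real^'n^'k. orthonormal_frame F \<and> pluecker F = fst a
                    \<and> d \<in> span (range (\<lambda>i. F$i))}"

definition points :: "('n::finite, 'k::finite) agplane \<Rightarrow> (real^'n) set" where
  "points a = {x. x - snd a \<in> lin_part a}"

definition fiber_map :: "('n::finite, 'k::finite) agplane set \<Rightarrow> real^'n \<Rightarrow> ('n, 'k) agplane" where
  "fiber_map M x = (THE a. a \<in> M \<and> x \<in> points a)"

definition is_fibration :: "('n::finite, 'k::finite) agplane set \<Rightarrow> bool" where
  "is_fibration M \<longleftrightarrow> M \<subseteq> AG
     \<and> (\<forall>a\<in>M. \<forall>b\<in>M. a \<noteq> b \<longrightarrow> points a \<inter> points b = {})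
     \<and> (\<forall>x. \<exists>a\<in>M. x \<in> points a)
     \<and> continuous_on UNIV (fiber_map M)"

text \<open>Skew: no two distinct fibers contain parallel lines, i.e. their
  linear parts share no nonzero direction.\<close>
definition is_skew_fibration :: "('n::finite, 'k::finite) agplane set \<Rightarrow> bool" where
  "is_skew_fibration M \<longleftrightarrow> is_fibration M
     \<and> (\<forall>a\<in>M. \<forall>b\<in>M. a \<noteq> b \<longrightarrow> lin_part a \<inter> lin_part b \<subseteq> {0})"

end

theory Submission
  imports Defs
begin

lemma fib_self:
  assumes F: "is_fibration M" and a: "a \<in> M"
  shows "fiber_map M (snd a) = a"
proof -
  have "a \<in> AG" using F a unfolding is_fibration_def by auto
  then obtain G v where G: "orthonormal_frame G" "a = (pluecker G, v)"
    unfolding AG_def by auto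
  have "snd a \<in> points a"
    unfolding points_def lin_part_def using G by (auto intro: span_0)
  moreover have "b = a" if "b \<in> M" "snd a \<in> points b" for b
    using F a that \<open>snd a \<in> points a\<close> unfolding is_fibration_def by blast
  ultimately show ?thesis unfolding fiber_map_def
    using a by (intro the_equality) auto
qed

lemma fib_in:
  assumes F: "is_fibration M"
  shows "fiber_map M x \<in> M"
proof -
  obtain a where a: "a \<in> M" "x \<in> points a" using F unfolding is_fibration_def by blast
  moreover have "b = a" if "b \<in> M" "x \<in> points b" for b
    using F a that unfolding is_fibration_def by blast
  ultimately have "fiber_map M x = a" unfolding fiber_map_def
    by (intro the_equality) blast+
  then show ?thesis using a by simp
qed

theorem lemma3p2:
  fixes M :: "('n::finite, 'k::finite) agplane set"
  assumes "is_skew_fibration M"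
  shows "closedin (top_of_set AG) M \<and>
         (\<forall>s :: nat \<Rightarrow> ('n, 'k) agplane.
           (\<forall>j. s j \<in> M) \<and>
           \<not> (\<exists>p\<in>M. \<exists>r. strict_mono r \<and> (s \<circ> r) \<longlonglongrightarrow> p) \<longrightarrow>
           filterlim (\<lambda>j. norm (snd (s j))) at_top sequentially)"
proof
  have F: "is_fibration M" using assms unfolding is_skew_fibration_def by simp
  have cont: "continuous_on UNIV (fiber_map M)" using F unfolding is_fibration_def by simp
  have sub: "M \<subseteq> AG" using F unfolding is_fibration_def by simp
  have eq: "M = AG \<inter> {p. fiber_map M (snd p) = p}"
  proof
    show "M \<subseteq> AG \<inter> {p. fiber_map M (snd p) = p}" using sub fib_self[OF F] by blast
    show "AG \<inter> {p. fiber_map M (snd p) = p} \<subseteq> M"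
    proof
      fix p assume "p \<in> AG \<inter> {p. fiber_map M (snd p) = p}"
      then have "p = fiber_map M (snd p)" by simp
      then show "p \<in> M" using fib_in[OF F, of "snd p"] by simp
    qed
  qed
  have "closed {p. fiber_map M (snd p) = p}"
    by (intro closed_Collect_eq continuous_on_compose2[OF cont] continuous_intros) auto
  then show "closedin (top_of_set AG) M"
    by (subst eq) (simp add: closedin_closed_Int)
  show "\<forall>s :: nat \<Rightarrow> ('n, 'k) agplane.
           (\<forall>j. s j \<in> M) \<and>
           \<not> (\<exists>p\<in>M. \<exists>r. strict_mono r \<and> (s \<circ> r) \<longlonglongrightarrow> p) \<longrightarrow>
           filterlim (\<lambda>j. norm (snd (s j))) at_top sequentially"
  proof (intro allI impI, elim conjE, rule ccontr)
    fix s :: "nat \<Rightarrow> ('n, 'k) agplane"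
    assume sM: "\<forall>j. s j \<in> M"
      and nacc: "\<not> (\<exists>p\<in>M. \<exists>r. strict_mono r \<and> (s \<circ> r) \<longlonglongrightarrow> p)"
      and nlim: "\<not> filterlim (\<lambda>j. norm (snd (s j))) at_top sequentially"
    from nlim obtain B where "\<not> eventually (\<lambda>j. B \<le> norm (snd (s j))) sequentially"
      unfolding filterlim_at_top by blast
    then have "frequently (\<lambda>j. norm (snd (s j)) < B) sequentially"
      unfolding frequently_def by (simp add: not_less)
    then have "infinite {j. norm (snd (s j)) < B}"
      by (simp add: frequently_cofinite cofinite_eq_sequentially[symmetric])
    then obtain r :: "nat \<Rightarrow> nat" where r: "strict_mono r" "\<forall>j. r j \<in> {j. norm (snd (s j)) < B}"
      using infinite_enumerate by metis
    have "\<forall>j. snd (s (r j)) \<in> cball 0 B" using r by (simp add: dist_norm less_imp_le)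
    then have "\<exists>l\<in>cball 0 B. \<exists>r'. strict_mono r' \<and> ((\<lambda>j. snd (s (r j))) \<circ> r') \<longlonglongrightarrow> l"
      using compact_imp_seq_compact[OF compact_cball, of "0::real^'n" B] unfolding seq_compact_def
      by (elim allE[where x="\<lambda>j. snd (s (r j))"]) (elim impE, assumption+)
    then obtain l and r' :: "nat \<Rightarrow> nat" where r': "strict_mono r'" "((\<lambda>j. snd (s (r j))) \<circ> r') \<longlonglongrightarrow> l"
      by blast
    have "((\<lambda>j. fiber_map M (snd (s (r (r' j)))))) \<longlonglongrightarrow> fiber_map M l"
      using continuous_on_tendsto_compose[OF cont r'(2)] by (simp add: o_def)
    moreover have "fiber_map M (snd (s (r (r' j)))) = s (r (r' j))" for j
      using fib_self[OF F] sM by blast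
    ultimately have "(s \<circ> (r \<circ> r')) \<longlonglongrightarrow> fiber_map M l" by (simp add: o_def)
    moreover have "strict_mono (r \<circ> r')" using r r' strict_mono_o by blast
    ultimately show False using nacc fib_in[OF F] by blast
  qed
qed

end
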